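(* Under the standing assumptions described in the context (including (H4)–(H8)), the predictor–corrector method is consistent: for every partition satisfying (H4) with step $h$, $$\max_{0\le n\le N}\frac{|\tau_{n+1}|}{h}\le \tfrac12H^2h+\tfrac12K_2H^3h^2,$$ and consequently $\max_{0\le n\le N}|\tau_{n+1}|/h\to0$ as $h\to0$ (along partitions satisfying (H4) with the same constants $H,K_2$).
   Context: Let $T>0$ and let $g:[0,T]\to[0,\infty)$ be increasing, left-continuous, continuous at $0$, with a finite set $D_g\subset(0,T)$ of discontinuity points; $\Delta^+\varphi(t)=\varphi(t^+)-\varphi(t)$; $g^B(t)=\sum_{s\in[0,t)}\Delta^+g(s)$, $g^C=g-g^B$; $\mu_g$ is the Lebesgue–Stieltjes measure with $\mu_g([c,d))=g(d)-g(c)$. For $u:[0,T]\to\mathbb R$ the Stieltjes derivative at $t$ is $u'_g(t)=\lim_{s\to t}\frac{u(s)-u(t)}{g(s)-g(t)}$ if $t\notin D_g$ and $u'_g(t)=\frac{u(t^+)-u(t)}{\Delta^+g(t)}$ if $t\in D_g$. Let $f:[0,T]\times\mathbb R\to\mathbb R$, $x_0\in\mathbb R$, and let $x$ be the solution of $x'_g(t)=f(t,x(t))$ for $\mu_g$-a.e. $t\in[0,T)$, $x(0)=x_0$; it satisfies $x(t)=x_0+\int_{[0,t)}f(s,x(s))\,\mathrm d\mu_g(s)$ for all $t\in[0,T]$. Put $f_*(x)(t)=f(t,x(t))$, $f_*^B(x)(t)=\sum_{s\in[0,t)}\Delta^+f_*(x)(s)$, $f_*^C(x)=f_*(x)-f_*^B(x)$.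 A function $u$ is $g$-Lipschitz with constant $H$ if $|u(t)-u(s)|\le H|g(t)-g(s)|$ for all $t,s$; $g$-continuous means: for every $t_0$ and $\epsilon>0$ there is $\delta>0$ with $|g(t)-g(t_0)|<\delta\Rightarrow|u(t)-u(t_0)|<\epsilon$. Hypotheses: (H4) $0=t_0<t_1<\dots<t_{N+1}=T$ with $t_{k+1}-t_k=h>0$ for all $k$, and $D_g\subset\{t_k\}$; $K_1=\max\{\Delta^+g(d):d\in D_g\}$. (H5) $f_*(x)$ is $g$-Lipschitz with constant $H>0$, and $f_*^C(x)$ and $g^C$ are Lipschitz with constant $H$. (H6) for every $c\in\mathbb R$, $f(\cdot,c)$ is bounded and $g$-continuous on $[0,T]$. (H7) for every $t$, $f(t,\cdot)\in C^1(\mathbb R)$ and $|\partial_x f(t,x)|<K_2$ for all $(t,x)$. (H8) for every $t\in[0,T)$ and $c$, the right limit $f(t^+,c)=\lim_{s\to t^+}f(s,c)$ exists, $f(t^+,\cdot)\in C^1(\mathbb R)$ and $|\partial_x f(t^+,x)|<K_3$ for all $(t,x)$. Notation: $x_k=x(t_k)$, $x_k^+=x(t_k^+)$. For $k=0,\dots,N$: $x^*_{k+1}=x_k^++f(t_k^+,x_k^+)(g(t_{k+1})-g(t_k^+))$ and $\tau_{k+1}=x_{k+1}-x_k^+-\tfrac12(f(t_k^+,x_k^+)+f(t_{k+1},x^*_{k+1}))(g(t_{k+1})-g(t_k^+))$. *)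

theory Defs
  imports "HOL-Analysis.Analysis"
begin

definition rlim :: "(real \<Rightarrow> real) \<Rightarrow> real \<Rightarrow> real" where
  "rlim \<phi> t = Lim (at_right t) \<phi>"

definition djump :: "(real \<Rightarrow> real) \<Rightarrow> real \<Rightarrow> real" where
  "djump \<phi> t = rlim \<phi> t - \<phi> t"

definition Dg :: "(real \<Rightarrow> real) \<Rightarrow> real \<Rightarrow> real set" where
  "Dg g T = {t \<in> {0..T}. \<not> continuous (at t within {0..T}) g}"

definition jump_part :: "(real \<Rightarrow> real) \<Rightarrow> real \<Rightarrow> real" where
  "jump_part \<phi> t = infsum (\<lambda>s. djump \<phi> s) {0..<t}"

definition cont_part :: "(real \<Rightarrow> real) \<Rightarrow> real \<Rightarrow> real" where
  "cont_part \<phi> t = \<phi> t - jump_part \<phi> t"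

(* Lebesgue-Stieltjes measure mu_g of the left-continuous nondecreasing g on [0,T],
   with mu_g([c,d)) = g d - g c.  g is extended constantly outside [0,T];
   mu_g is obtained by reflecting the (right-continuous) interval measure of
   s |-> - g(-s). *)
definition g_ext :: "(real \<Rightarrow> real) \<Rightarrow> real \<Rightarrow> real \<Rightarrow> real" where
  "g_ext g T t = g (max 0 (min T t))"

definition mu_g :: "(real \<Rightarrow> real) \<Rightarrow> real \<Rightarrow> real measure" where
  "mu_g g T = distr (interval_measure (\<lambda>s. - g_ext g T (- s))) borel uminus"

definition has_g_deriv :: "(real \<Rightarrow> real) \<Rightarrow> (real \<Rightarrow> real) \<Rightarrow> real \<Rightarrow> real \<Rightarrow> real \<Rightarrow> bool" where
  "has_g_deriv u g T t l \<longleftrightarrow>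
     (if t \<in> Dg g T
      then (\<exists>L. (u \<longlongrightarrow> L) (at_right t)) \<and> l = djump u t / djump g t
      else ((\<lambda>s. (u s - u t) / (g s - g t)) \<longlongrightarrow> l)
             (at t within {s \<in> {0..T}. g s \<noteq> g t}))"

definition g_lipschitz_on :: "real set \<Rightarrow> (real \<Rightarrow> real) \<Rightarrow> real \<Rightarrow> (real \<Rightarrow> real) \<Rightarrow> bool" where
  "g_lipschitz_on S g H u \<longleftrightarrow> (\<forall>t\<in>S. \<forall>s\<in>S. \<bar>u t - u s\<bar> \<le> H * \<bar>g t - g s\<bar>)"

definition lipschitz_const_on :: "real set \<Rightarrow> real \<Rightarrow> (real \<Rightarrow> real) \<Rightarrow> bool" where
  "lipschitz_const_on S H u \<longleftrightarrow> (\<forall>t\<in>S. \<forall>s\<in>S. \<bar>u t - u s\<bar> \<le> H * \<bar>t - s\<bar>)"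

definition g_continuous_on :: "real set \<Rightarrow> (real \<Rightarrow> real) \<Rightarrow> (real \<Rightarrow> real) \<Rightarrow> bool" where
  "g_continuous_on S g u \<longleftrightarrow>
     (\<forall>t0\<in>S. \<forall>\<epsilon>>0. \<exists>\<delta>>0. \<forall>t\<in>S. \<bar>g t - g t0\<bar> < \<delta> \<longrightarrow> \<bar>u t - u t0\<bar> < \<epsilon>)"

definition fplus :: "(real \<Rightarrow> real \<Rightarrow> real) \<Rightarrow> real \<Rightarrow> real \<Rightarrow> real" where
  "fplus f t c = rlim (\<lambda>s. f s c) t"

definition pc_h :: "real \<Rightarrow> nat \<Rightarrow> real" where
  "pc_h T N = T / real (Suc N)"

definition pc_t :: "real \<Rightarrow> nat \<Rightarrow> nat \<Rightarrow> real" where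
  "pc_t T N k = real k * pc_h T N"

definition pc_xstar :: "(real \<Rightarrow> real) \<Rightarrow> (real \<Rightarrow> real \<Rightarrow> real) \<Rightarrow> (real \<Rightarrow> real) \<Rightarrow> real \<Rightarrow> nat \<Rightarrow> nat \<Rightarrow> real" where
  "pc_xstar g f x T N k =
     rlim x (pc_t T N k)
     + fplus f (pc_t T N k) (rlim x (pc_t T N k)) * (g (pc_t T N (Suc k)) - rlim g (pc_t T N k))"

definition pc_tau :: "(real \<Rightarrow> real) \<Rightarrow> (real \<Rightarrow> real \<Rightarrow> real) \<Rightarrow> (real \<Rightarrow> real) \<Rightarrow> real \<Rightarrow> nat \<Rightarrow> nat \<Rightarrow> real" where
  "pc_tau g f x T N j =
     (let k = j - 1 in
      x (pc_t T N (Suc k)) - rlim x (pc_t T N k)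
      - (1/2) * (fplus f (pc_t T N k) (rlim x (pc_t T N k))
                 + f (pc_t T N (Suc k)) (pc_xstar g f x T N k))
              * (g (pc_t T N (Suc k)) - rlim g (pc_t T N k)))"

end

theory Submission
  imports Defs
begin


lemma g_ext_mono:
  assumes "mono_on {0..T} g" "0 \<le> T" "u \<le> v"
  shows "g_ext g T u \<le> g_ext g T v"
  unfolding g_ext_def using assms
  by (intro mono_onD[OF assms(1)]) auto

lemma g_ext_leftcont:
  assumes "\<forall>t\<in>{0<..T}. continuous (at_left t) g" "0 < T"
  shows "continuous (at_left u) (g_ext g T)"
proof -
  consider "u \<le> 0" | "0 < u" "u \<le> T" | "T < u" by linarith
  then show ?thesis
  proof cases
    case 1
    have "\<forall>\<^sub>F s in at_left u. g_ext g T s = g_ext g T u"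
      using 1 by (auto simp: eventually_at_left_field g_ext_def intro!: exI[of _ "u - 1"])
    then show ?thesis unfolding continuous_within
      by (rule tendsto_eventually)
  next
    case 2
    have ev: "\<forall>\<^sub>F s in at_left u. g_ext g T s = g s"
      using 2 by (auto simp: eventually_at_left_field g_ext_def intro!: exI[of _ "0"])
    have "(g \<longlongrightarrow> g u) (at_left u)" using assms(1) 2
      by (auto simp: continuous_within)
    then have "(g_ext g T \<longlongrightarrow> g u) (at_left u)"
      using tendsto_cong[OF ev] by simp
    moreover have "g_ext g T u = g u" using 2 by (simp add: g_ext_def)
    ultimately show ?thesis by (simp add: continuous_within)
  next
    case 3
    have "\<forall>\<^sub>F s in at_left u. g_ext g T s = g_ext g T u"
      using 3 by (auto simp: eventually_at_left_field g_ext_def intro!: exI[of _ "T"])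
    then show ?thesis unfolding continuous_within
      by (rule tendsto_eventually)
  qed
qed

lemma mu_Ico:
  assumes "mono_on {0..T} g" "\<forall>t\<in>{0<..T}. continuous (at_left t) g" "0 < T"
    "0 \<le> c" "c \<le> d" "d \<le> T"
  shows "emeasure (mu_g g T) {c..<d} = ennreal (g d - g c)"
proof -
  define G where "G = (\<lambda>s. - g_ext g T (- s))"
  have mono: "G x \<le> G y" if "x \<le> y" for x y
    unfolding G_def using g_ext_mono[OF assms(1), of "-y" "-x"] assms that by simp
  have rc: "continuous (at_right a) G" for a
  proof -
    have "continuous (at_left (-a)) (g_ext g T)" using g_ext_leftcont assms by blast
    then have "((g_ext g T) \<longlongrightarrow> g_ext g T (-a)) (at_left (-a))"
      by (simp add: continuous_within)
    then have "((g_ext g T) \<longlongrightarrow> g_ext g T (-a)) (filtermap uminus (at_right a))"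
      using at_left_minus[of "-a"] by simp
    then have "((\<lambda>s. g_ext g T (- s)) \<longlongrightarrow> g_ext g T (-a)) (at_right a)"
      by (simp add: filterlim_filtermap o_def)
    then show ?thesis unfolding G_def continuous_within
      by (intro tendsto_intros) simp
  qed
  have "uminus -` {c..<d} \<inter> space (interval_measure G) = {-d<..-c}"
    by auto
  moreover have "uminus \<in> measurable (interval_measure G) borel"
    by (simp add: measurable_cong_sets[OF sets_interval_measure refl])
  ultimately have "emeasure (mu_g g T) {c..<d} = emeasure (interval_measure G) {-d<..-c}"
    unfolding mu_g_def G_def[symmetric] by (subst emeasure_distr) auto
  also have "\<dots> = G (-c) - G (-d)"
    using assms by (intro emeasure_interval_measure_Ioc mono rc) auto
  also have "G (-c) - G (-d) = g d - g c"
    using assms unfolding G_def g_ext_def by simp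
  finally show ?thesis .
qed

lemma sets_mu_g[simp, measurable_cong]: "sets (mu_g g T) = sets borel"
  by (simp add: mu_g_def)

lemma space_mu_g[simp]: "space (mu_g g T) = UNIV"
  by (simp add: mu_g_def)




locale pc =
  fixes T x0 H K2 :: real and g x :: "real \<Rightarrow> real" and f :: "real \<Rightarrow> real \<Rightarrow> real"
  assumes T_pos: "T > 0"
    and g_mono: "mono_on {0..T} g"
    and g_leftcont: "\<forall>t\<in>{0<..T}. continuous (at_left t) g"
    and x_integrable: "set_integrable (mu_g g T) {0..<T} (\<lambda>s. f s (x s))"
    and x_int_eq: "\<forall>t\<in>{0..T}. x t = x0 + (LINT s:{0..<t}|mu_g g T. f s (x s))"
    and H_pos: "H > 0"
    and H5a: "g_lipschitz_on {0..T} g H (\<lambda>t. f t (x t))"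
    and H5b: "lipschitz_const_on {0..T} H (cont_part (\<lambda>t. f t (x t)))"
    and H5c: "lipschitz_const_on {0..T} H (cont_part g)"
    and H7a: "\<forall>t\<in>{0..T}. (f t) C1_differentiable_on UNIV"
    and H7b: "\<forall>t\<in>{0..T}. \<forall>y. \<bar>deriv (f t) y\<bar> < K2"
    and H8a: "\<forall>t\<in>{0..<T}. \<forall>c. \<exists>L. ((\<lambda>s. f s c) \<longlongrightarrow> L) (at_right t)"
begin

abbreviation "M \<equiv> mu_g g T"
abbreviation "F \<equiv> (\<lambda>t. f t (x t))"

lemma emeasure_Ico: "0 \<le> c \<Longrightarrow> c \<le> d \<Longrightarrow> d \<le> T \<Longrightarrow> emeasure M {c..<d} = ennreal (g d - g c)"
  using mu_Ico[OF g_mono g_leftcont T_pos] by blast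

lemma g_le: "0 \<le> c \<Longrightarrow> c \<le> d \<Longrightarrow> d \<le> T \<Longrightarrow> g c \<le> g d"
  using g_mono by (auto intro: mono_onD)

lemma measure_Ico: "0 \<le> c \<Longrightarrow> c \<le> d \<Longrightarrow> d \<le> T \<Longrightarrow> measure M {c..<d} = g d - g c"
  using emeasure_Ico g_le by (simp add: measure_def)

lemma emeasure_fin: assumes "A \<subseteq> {0..<T}" "A \<in> sets borel" shows "emeasure M A \<noteq> top"
proof -
  have "emeasure M A \<le> emeasure M {0..<T}" using assms by (intro emeasure_mono) auto
  also have "\<dots> = ennreal (g T - g 0)" using emeasure_Ico T_pos by simp
  finally show ?thesis by (auto simp: top_unique)
qed

lemma F_integrable: "A \<subseteq> {0..<T} \<Longrightarrow> A \<in> sets borel \<Longrightarrow> set_integrable M A F"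
  using set_integrable_subset[OF x_integrable] by simp

lemma F_bound: "t \<in> {0..T} \<Longrightarrow> \<bar>F t\<bar> \<le> \<bar>F 0\<bar> + H * (g T - g 0)"
proof -
  assume t: "t \<in> {0..T}"
  have "\<bar>F t - F 0\<bar> \<le> H * \<bar>g t - g 0\<bar>" using H5a t T_pos by (auto simp: g_lipschitz_on_def)
  also have "\<bar>g t - g 0\<bar> = g t - g 0" using g_le[of 0 t] t by auto
  also have "H * (g t - g 0) \<le> H * (g T - g 0)" using g_le[of t T] t H_pos by auto
  finally show ?thesis by linarith
qed

lemma K2_lip: assumes "t \<in> {0..T}" shows "\<bar>f t u - f t v\<bar> \<le> K2 * \<bar>u - v\<bar>"
proof -
  have D: "DERIV (f t) z :> deriv (f t) z" for z
    using H7a assms by (auto simp: C1_differentiable_on_eq DERIV_deriv_iff_real_differentiable)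
  have K: "\<bar>deriv (f t) z\<bar> \<le> K2" for z using H7b assms by (meson less_imp_le)
  show ?thesis
  proof (cases u v rule: linorder_cases)
    case less
    then obtain z where "f t v - f t u = (v - u) * deriv (f t) z"
      using MVT2[of u v "f t" "deriv (f t)"] D by blast
    then have "\<bar>f t u - f t v\<bar> = (v - u) * \<bar>deriv (f t) z\<bar>" using less
      by (metis abs_minus_commute abs_mult abs_of_pos diff_gt_0_iff_gt)
    moreover have "(v - u) * \<bar>deriv (f t) z\<bar> \<le> (v - u) * K2" using K[of z] less by (intro mult_left_mono) auto
    ultimately show ?thesis using less by (simp add: mult.commute)
  next
    case equal then show ?thesis by simp
  next
    case greater
    then obtain z where "f t u - f t v = (u - v) * deriv (f t) z"
      using MVT2[of v u "f t" "deriv (f t)"] D by blast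
    then have "\<bar>f t u - f t v\<bar> = (u - v) * \<bar>deriv (f t) z\<bar>" using greater
      by (metis abs_mult abs_of_pos diff_gt_0_iff_gt)
    moreover have "(u - v) * \<bar>deriv (f t) z\<bar> \<le> (u - v) * K2" using K[of z] greater by (intro mult_left_mono) auto
    ultimately show ?thesis using greater by (simp add: mult.commute)
  qed
qed

lemma djump_zero: "(\<phi> \<longlongrightarrow> \<phi> p) (at p) \<Longrightarrow> djump \<phi> p = 0"
proof -
  assume "(\<phi> \<longlongrightarrow> \<phi> p) (at p)"
  then have "(\<phi> \<longlongrightarrow> \<phi> p) (at_right p)" by (rule tendsto_mono[OF at_le, rotated]) simp
  then show ?thesis unfolding djump_def rlim_def by (simp add: tendsto_Lim)
qed

end




locale pc_step = pc +
  fixes N k :: nat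
  assumes part: "Dg g T \<subseteq> pc_t T N ` {0..Suc N}" and kN: "k \<le> N"
begin

definition "h = pc_h T N"
definition "a = pc_t T N k"
definition "b = pc_t T N (Suc k)"

lemma h_pos: "h > 0" using T_pos by (simp add: h_def pc_h_def)
lemma b_eq: "b = a + h" by (simp add: a_def b_def h_def pc_t_def algebra_simps)
lemma a_ge: "0 \<le> a" using h_pos by (simp add: a_def pc_t_def h_def)
lemma b_le: "b \<le> T"
proof -
  have "b = real (Suc k) * (T / real (Suc N))" by (simp add: b_def pc_t_def pc_h_def)
  also have "\<dots> \<le> real (Suc N) * (T / real (Suc N))"
    using kN T_pos by (intro mult_right_mono) auto
  also have "\<dots> = T" by simp
  finally show ?thesis .
qed
lemma ab: "a < b" using b_eq h_pos by simp

lemma no_D: assumes "a < p" "p < b" shows "p \<notin> Dg g T"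
proof
  assume "p \<in> Dg g T"
  then obtain j where "p = pc_t T N j" using part by auto
  then have "real k * h < real j * h" "real j * h < real (Suc k) * h"
    using assms by (auto simp: a_def b_def pc_t_def h_def)
  then have "k < j" "j < Suc k" using h_pos
    by (simp_all add: mult_less_cancel_right)
  then show False by simp
qed

lemma p_int: "a < p \<Longrightarrow> p < b \<Longrightarrow> 0 < p \<and> p < T"
  using a_ge b_le by auto

lemma g_tend: assumes "a < p" "p < b" shows "(g \<longlongrightarrow> g p) (at p)"
proof -
  have "continuous (at p within {0..T}) g"
    using no_D[OF assms] p_int[OF assms] by (auto simp: Dg_def)
  then show ?thesis using p_int[OF assms] by (simp add: at_within_Icc_at continuous_within)
qed

lemma F_tend: assumes "a < p" "p < b" shows "(F \<longlongrightarrow> F p) (at p)"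
proof -
  have ev: "\<forall>\<^sub>F s in at p. norm (F s - F p) \<le> H * \<bar>g s - g p\<bar>"
  proof -
    have "\<forall>\<^sub>F s in at p. s \<in> {0<..<T}"
      using p_int[OF assms] by (intro eventually_at_in_open') auto
    then show ?thesis
      by eventually_elim (use H5a p_int[OF assms] in \<open>auto simp: g_lipschitz_on_def\<close>)
  qed
  have "((\<lambda>s. H * \<bar>g s - g p\<bar>) \<longlongrightarrow> H * \<bar>g p - g p\<bar>) (at p)"
    by (intro tendsto_intros g_tend[OF assms])
  then have "((\<lambda>s. F s - F p) \<longlongrightarrow> 0) (at p)"
    by (intro Lim_null_comparison[OF ev]) simp
  then show ?thesis by (simp add: LIM_zero_iff)
qed

lemma jump_const:
  assumes z: "\<forall>p\<in>{a<..<b}. djump \<phi> p = 0" and d: "a < d" "d \<le> b"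
  shows "jump_part \<phi> d = jump_part \<phi> b"
  unfolding jump_part_def
  by (rule infsum_cong_neutral) (use z d in auto)

lemma djump_g: "\<forall>p\<in>{a<..<b}. djump g p = 0"
  using g_tend djump_zero by auto
lemma djump_F: "\<forall>p\<in>{a<..<b}. djump F p = 0"
  using F_tend djump_zero by auto

lemma g_lip: assumes "a < c" "c \<le> b" "a < d" "d \<le> b"
  shows "\<bar>g d - g c\<bar> \<le> H * \<bar>d - c\<bar>"
proof -
  have "\<bar>cont_part g d - cont_part g c\<bar> \<le> H * \<bar>d - c\<bar>"
    using H5c assms a_ge b_le by (auto simp: lipschitz_const_on_def)
  moreover have "jump_part g d = jump_part g c"
    using jump_const[OF djump_g] assms by metis
  ultimately show ?thesis by (simp add: cont_part_def)
qed

lemma F_lip: assumes "a < c" "c \<le> b" "a < d" "d \<le> b"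
  shows "\<bar>F d - F c\<bar> \<le> H * \<bar>d - c\<bar>"
proof -
  have "\<bar>cont_part F d - cont_part F c\<bar> \<le> H * \<bar>d - c\<bar>"
    using H5b assms a_ge b_le by (auto simp: lipschitz_const_on_def)
  moreover have "jump_part F d = jump_part F c"
    using jump_const[OF djump_F] assms by metis
  ultimately show ?thesis by (simp add: cont_part_def)
qed

lemma mu_open: assumes "a \<le> c" "c < d" "d \<le> b"
  shows "emeasure M {c<..<d} \<le> ennreal (H * (d - c))"
proof -
  define A where "A n = {c + (d - c) / real (n + 2) ..< d}" for n :: nat
  have inc: "incseq A"
  proof (rule incseq_SucI)
    fix n
    have "(d - c) / real (Suc n + 2) \<le> (d - c) / real (n + 2)"
      using assms by (intro divide_left_mono) auto
    then show "A n \<subseteq> A (Suc n)" unfolding A_def by auto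
  qed
  have U: "(\<Union>n. A n) = {c<..<d}"
  proof
    have pos: "0 < (d - c) / real (n + 2)" for n using assms by simp
    show "(\<Union>n. A n) \<subseteq> {c<..<d}"
    proof
      fix s assume "s \<in> (\<Union>n. A n)"
      then obtain n where "s \<in> A n" by blast
      then show "s \<in> {c<..<d}" using pos[of n] by (auto simp: A_def)
    qed
    show "{c<..<d} \<subseteq> (\<Union>n. A n)"
    proof
      fix s assume s: "s \<in> {c<..<d}"
      obtain n :: nat where n: "(d - c) / (s - c) < real n" using reals_Archimedean2 by blast
      have "(d - c) / (s - c) < real (n + 2)" using n by simp
      then have "(d - c) < real (n + 2) * (s - c)" using s by (simp add: divide_less_eq)
      then have "(d - c) / real (n + 2) < s - c" by (simp add: divide_less_eq mult.commute)
      then have "s \<in> A n" using s by (auto simp: A_def)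
      then show "s \<in> (\<Union>n. A n)" by blast
    qed
  qed
  have "emeasure M (A n) \<le> ennreal (H * (d - c))" for n
  proof -
    define e where "e = c + (d - c) / real (n + 2)"
    have "(d - c) * 1 < (d - c) * real (n + 2)" using assms by (intro mult_strict_left_mono) auto
    then have "(d - c) / real (n + 2) < d - c" by (simp add: divide_less_eq)
    then have e: "c < e" "e < d"
      using assms by (auto simp: e_def)
    have "emeasure M (A n) = ennreal (g d - g e)"
      unfolding A_def e_def[symmetric] using e assms a_ge b_le by (intro emeasure_Ico) auto
    also have "g d - g e \<le> H * (d - c)"
    proof -
      have "g d - g e \<le> H * \<bar>d - e\<bar>" using g_lip[of e d] e assms by auto
      also have "\<dots> \<le> H * (d - c)" using e H_pos by (intro mult_left_mono) auto
      finally show ?thesis .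
    qed
    finally show ?thesis by (simp add: ennreal_leI)
  qed
  then have "(SUP n. emeasure M (A n)) \<le> ennreal (H * (d - c))" by (simp add: SUP_le_iff)
  moreover have rA: "range A \<subseteq> sets M" by (auto simp: A_def)
  moreover have "(SUP n. emeasure M (A n)) = emeasure M (\<Union>n. A n)"
    by (rule SUP_emeasure_incseq[OF rA inc])
  ultimately show ?thesis using U by simp
qed

end




context pc
begin

lemma int_bound:
  assumes "set_integrable M A \<phi>" "A \<in> sets borel" "emeasure M A \<noteq> top"
    "\<And>s. s \<in> A \<Longrightarrow> \<bar>\<phi> s\<bar> \<le> K"
  shows "\<bar>LINT s:A|M. \<phi> s\<bar> \<le> K * measure M A"
proof -
  have ci: "set_integrable M A (\<lambda>_. K)" using assms(2,3)
    unfolding set_integrable_def by (intro integrable_indicator) (auto simp: less_top)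
  have c: "(LINT s:A|M. K) = K * measure M A" using set_integral_const[of A M K] assms(2,3) by simp
  have "\<phi> s \<le> K" "- \<phi> s \<le> K" if "s \<in> A" for s using assms(4)[OF that] by auto
  have "(LINT s:A|M. \<phi> s) \<le> (LINT s:A|M. K)"
    using assms \<open>\<And>s. s \<in> A \<Longrightarrow> \<phi> s \<le> K\<close> by (intro set_integral_mono[OF assms(1) ci]) auto
  moreover have "(LINT s:A|M. - \<phi> s) \<le> (LINT s:A|M. K)"
    using assms \<open>\<And>s. s \<in> A \<Longrightarrow> - \<phi> s \<le> K\<close> by (intro set_integral_mono[OF _ ci]) (auto simp: set_integrable_def)
  moreover have "(LINT s:A|M. - \<phi> s) = - (LINT s:A|M. \<phi> s)" using set_integral_uminus[OF assms(1)] .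
  ultimately show ?thesis using c by linarith
qed

end

context pc_step
begin

definition "X = x0 + (LINT s:{0..a}|M. F s)"
definition "B = \<bar>F 0\<bar> + H * (g T - g 0)"

lemma a_lt_T: "a < T" using ab b_le by simp

lemma meas_open: assumes "a \<le> c" "c < d" "d \<le> b"
  shows "measure M {c<..<d} \<le> H * (d - c)" "emeasure M {c<..<d} \<noteq> top"
proof -
  have f: "emeasure M {c<..<d} \<noteq> top" using assms a_ge b_le by (intro emeasure_fin) auto
  then show "emeasure M {c<..<d} \<noteq> top" .
  have "ennreal (measure M {c<..<d}) \<le> ennreal (H * (d - c))"
    using mu_open[OF assms] emeasure_eq_ennreal_measure[OF f] by simp
  then show "measure M {c<..<d} \<le> H * (d - c)" using H_pos assms by (simp add: ennreal_le_iff)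
qed

lemma x_diff: assumes "a < s" "s \<le> b" shows "x s - X = (LINT t:{a<..<s}|M. F t)"
proof -
  have "{0..<s} = {0..a} \<union> {a<..<s}" using assms a_ge by auto
  moreover have "(LINT t:{0..a} \<union> {a<..<s}|M. F t) = (LINT t:{0..a}|M. F t) + (LINT t:{a<..<s}|M. F t)"
    using assms a_lt_T b_le a_ge by (intro set_integral_Un F_integrable) auto
  moreover have "x s = x0 + (LINT t:{0..<s}|M. F t)" using x_int_eq assms a_ge b_le by auto
  ultimately show ?thesis by (simp add: X_def)
qed

lemma x_close: assumes "a < s" "s \<le> b" shows "\<bar>x s - X\<bar> \<le> B * (H * (s - a))"
proof -
  have "\<bar>x s - X\<bar> \<le> B * measure M {a<..<s}"
    unfolding x_diff[OF assms] using assms a_ge b_le meas_open[of a s]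
    by (intro int_bound F_integrable) (auto simp: B_def intro!: F_bound)
  also have "\<dots> \<le> B * (H * (s - a))"
    using meas_open[of a s] assms g_le[of 0 T] T_pos H_pos by (intro mult_left_mono) (auto simp: B_def)
  finally show ?thesis .
qed

lemma ev_ab: "\<forall>\<^sub>F s in at_right a. a < s \<and> s < b"
  using ab by (auto simp: eventually_at_right_field intro!: exI[of _ b])

lemma x_tend: "(x \<longlongrightarrow> X) (at_right a)"
proof -
  have "\<forall>\<^sub>F s in at_right a. norm (x s - X) \<le> B * (H * (s - a))"
    using ev_ab by eventually_elim (use x_close in auto)
  moreover have "((\<lambda>s. B * (H * (s - a))) \<longlongrightarrow> 0) (at_right a)"
  proof -
    have "((\<lambda>s. B * (H * (s - a))) \<longlongrightarrow> B * (H * (a - a))) (at_right a)" by (intro tendsto_intros)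
    then show ?thesis by simp
  qed
  ultimately have "((\<lambda>s. x s - X) \<longlongrightarrow> 0) (at_right a)"
    by (rule Lim_null_comparison)
  then show ?thesis by (simp add: LIM_zero_iff)
qed

lemma rlim_x: "rlim x a = X"
  unfolding rlim_def by (rule tendsto_Lim[OF _ x_tend]) simp

definition "Dl = measure M {a<..<b}"

lemma g_tend_a: "(g \<longlongrightarrow> g b - Dl) (at_right a)"
proof -
  have "norm (g s - (g b - Dl)) \<le> H * (s - a)" if s: "a < s" "s < b" for s
  proof -
    have U: "{a<..<b} = {a<..<s} \<union> {s..<b}" using s by auto
    have fs: "emeasure M {s..<b} \<noteq> top" by (rule emeasure_fin) (use s a_ge b_le in auto)
    have "Dl = measure M {a<..<s} + measure M {s..<b}"
      unfolding Dl_def U using s a_ge b_le meas_open[of a s] fs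
      by (intro measure_Union) auto
    moreover have "measure M {s..<b} = g b - g s" using s a_ge b_le by (intro measure_Ico) auto
    ultimately have "g s - (g b - Dl) = measure M {a<..<s}" by simp
    then show ?thesis using meas_open[of a s] s by simp
  qed
  then have "\<forall>\<^sub>F s in at_right a. norm (g s - (g b - Dl)) \<le> H * (s - a)"
    using ev_ab by (auto elim: eventually_mono)
  moreover have "((\<lambda>s. H * (s - a)) \<longlongrightarrow> 0) (at_right a)"
  proof -
    have "((\<lambda>s. H * (s - a)) \<longlongrightarrow> H * (a - a)) (at_right a)" by (intro tendsto_intros)
    then show ?thesis by simp
  qed
  ultimately have "((\<lambda>s. g s - (g b - Dl)) \<longlongrightarrow> 0) (at_right a)"
    by (rule Lim_null_comparison)
  then show ?thesis by (simp add: LIM_zero_iff)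
qed

lemma rlim_g: "g b - rlim g a = Dl"
  unfolding rlim_def using tendsto_Lim[OF _ g_tend_a] by simp

lemma Dl_bounds: "0 \<le> Dl" "Dl \<le> H * h"
  using meas_open[of a b] ab b_eq by (auto simp: Dl_def)

definition "m = fplus f a X"

lemma F_tend_a: "(F \<longlongrightarrow> m) (at_right a)"
proof -
  obtain L where L: "((\<lambda>s. f s X) \<longlongrightarrow> L) (at_right a)"
  proof -
    have "a \<in> {0..<T}" using a_ge a_lt_T by auto
    then show ?thesis using H8a that by blast
  qed
  have mL: "m = L" unfolding m_def fplus_def rlim_def by (rule tendsto_Lim[OF _ L]) simp
  have "\<forall>\<^sub>F s in at_right a. norm (F s - f s X) \<le> K2 * \<bar>x s - X\<bar>"
    using ev_ab by eventually_elim (use K2_lip a_ge b_le in auto)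
  moreover have "((\<lambda>s. K2 * \<bar>x s - X\<bar>) \<longlongrightarrow> 0) (at_right a)"
  proof -
    have "((\<lambda>s. K2 * \<bar>x s - X\<bar>) \<longlongrightarrow> K2 * \<bar>X - X\<bar>) (at_right a)" by (intro tendsto_intros x_tend)
    then show ?thesis by simp
  qed
  ultimately have "((\<lambda>s. F s - f s X) \<longlongrightarrow> 0) (at_right a)"
    by (rule Lim_null_comparison)
  then have "((\<lambda>s. (F s - f s X) + f s X) \<longlongrightarrow> 0 + L) (at_right a)"
    by (intro tendsto_intros L)
  then show ?thesis using mL by simp
qed

lemma F_m: assumes "a < s" "s \<le> b" shows "\<bar>F s - m\<bar> \<le> H * (s - a)"
proof (rule tendsto_upperbound)
  show "((\<lambda>s'. \<bar>F s - F s'\<bar>) \<longlongrightarrow> \<bar>F s - m\<bar>) (at_right a)"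
    by (intro tendsto_intros F_tend_a)
  have "\<forall>\<^sub>F s' in at_right a. a < s' \<and> s' < s"
    using assms by (auto simp: eventually_at_right_field intro!: exI[of _ s])
  then show "\<forall>\<^sub>F s' in at_right a. \<bar>F s - F s'\<bar> \<le> H * (s - a)"
  proof eventually_elim
    case (elim s')
    then have "\<bar>F s - F s'\<bar> \<le> H * \<bar>s - s'\<bar>" using F_lip[of s' s] assms by auto
    also have "\<dots> \<le> H * (s - a)" using elim assms H_pos by (intro mult_left_mono) auto
    finally show ?case .
  qed
qed simp

lemma F_M: assumes "a < s" "s \<le> b" shows "\<bar>F s - F b\<bar> \<le> H * (b - s)"
proof -
  have "\<bar>F s - F b\<bar> \<le> H * \<bar>s - b\<bar>" using F_lip[of b s] assms ab by auto
  moreover have "\<bar>s - b\<bar> = b - s" using assms by auto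
  ultimately show ?thesis by simp
qed

end




lemma mid_bound: fixes p q r u v :: real
  assumes "\<bar>p - q\<bar> \<le> u" "\<bar>p - r\<bar> \<le> v" shows "\<bar>p - (q + r) / 2\<bar> \<le> (u + v) / 2"
  using assms by (simp add: abs_le_iff field_simps)

context pc_step
begin

lemma K2_nonneg: "0 \<le> K2" using H7b T_pos by (metis abs_ge_zero atLeastAtMost_iff less_eq_real_def order.strict_trans1)

lemma I_eq: "x b - X = (LINT t:{a<..<b}|M. F t)" using x_diff[of b] ab by simp

lemma int_const: "(LINT t:{a<..<b}|M. F t - c) = (LINT t:{a<..<b}|M. F t) - c * Dl"
proof -
  have fin: "emeasure M {a<..<b} \<noteq> top" using meas_open[of a b] ab by simp
  have i1: "set_integrable M {a<..<b} F" using a_ge b_le by (intro F_integrable) auto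
  have i2: "set_integrable M {a<..<b} (\<lambda>_. c)" using fin
    unfolding set_integrable_def by (intro integrable_indicator) (auto simp: less_top)
  show ?thesis using set_integral_diff(2)[OF i1 i2] set_integral_const[of "{a<..<b}" M c] fin
    by (simp add: Dl_def mult.commute)
qed

lemma int_est: assumes "\<And>s. s \<in> {a<..<b} \<Longrightarrow> \<bar>F s - c\<bar> \<le> K"
  shows "\<bar>(x b - X) - c * Dl\<bar> \<le> K * Dl"
proof -
  have fin: "emeasure M {a<..<b} \<noteq> top" using meas_open[of a b] ab by simp
  have i1: "set_integrable M {a<..<b} F" using a_ge b_le by (intro F_integrable) auto
  have i2: "set_integrable M {a<..<b} (\<lambda>_. c)" using fin
    unfolding set_integrable_def by (intro integrable_indicator) (auto simp: less_top)
  have "\<bar>LINT t:{a<..<b}|M. F t - c\<bar> \<le> K * measure M {a<..<b}"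
    by (rule int_bound) (use set_integral_diff(1)[OF i1 i2] fin assms in auto)
  then show ?thesis using int_const I_eq by (simp add: Dl_def)
qed

lemma tau_bound: "\<bar>pc_tau g f x T N (k + 1)\<bar> \<le> (1/2) * H^2 * h^2 + (1/2) * K2 * H^3 * h^3"
proof -
  define c where "c = (m + F b) / 2"
  define xs where "xs = X + m * Dl"
  have tau: "pc_tau g f x T N (k + 1) = x b - X - (1/2) * (m + f b xs) * Dl"
    unfolding pc_tau_def pc_xstar_def Let_def
    using rlim_x rlim_g by (simp add: a_def[symmetric] b_def[symmetric] m_def[symmetric] xs_def)
  have E1: "\<bar>(x b - X) - c * Dl\<bar> \<le> (H * h / 2) * Dl"
  proof (rule int_est)
    fix s assume s: "s \<in> {a<..<b}"
    have "\<bar>F s - m\<bar> \<le> H * (s - a)" "\<bar>F s - F b\<bar> \<le> H * (b - s)" using s F_m F_M by auto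
    then have "\<bar>F s - c\<bar> \<le> (H * (s - a) + H * (b - s)) / 2" unfolding c_def by (rule mid_bound)
    also have "\<dots> = H * h / 2" using b_eq by (simp add: algebra_simps)
    finally show "\<bar>F s - c\<bar> \<le> H * h / 2" .
  qed
  have E2: "\<bar>(x b - X) - m * Dl\<bar> \<le> (H * h) * Dl"
  proof (rule int_est)
    fix s assume s: "s \<in> {a<..<b}"
    have "\<bar>F s - m\<bar> \<le> H * (s - a)" using s F_m by auto
    also have "\<dots> \<le> H * h" using s b_eq H_pos by (intro mult_left_mono) auto
    finally show "\<bar>F s - m\<bar> \<le> H * h" .
  qed
  have E3: "\<bar>F b - f b xs\<bar> \<le> K2 * ((H * h) * Dl)"
  proof -
    have "\<bar>F b - f b xs\<bar> \<le> K2 * \<bar>x b - xs\<bar>" using K2_lip a_ge ab b_le by simp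
    also have "\<dots> \<le> K2 * ((H * h) * Dl)" using E2 K2_nonneg
      by (intro mult_left_mono) (auto simp: xs_def algebra_simps)
    finally show ?thesis .
  qed
  have split: "pc_tau g f x T N (k + 1) = ((x b - X) - c * Dl) + (1/2) * (F b - f b xs) * Dl"
    unfolding tau c_def by (simp add: algebra_simps)
  have D0: "0 \<le> Dl" and D1: "Dl \<le> H * h" using Dl_bounds by auto
  have Hh: "0 \<le> H * h" using H_pos h_pos by simp
  have "\<bar>pc_tau g f x T N (k + 1)\<bar> \<le> (H * h / 2) * Dl + (1/2) * (K2 * ((H * h) * Dl)) * Dl"
  proof -
    have t1: "\<bar>((x b - X) - c * Dl) + (1/2) * (F b - f b xs) * Dl\<bar> \<le> \<bar>(x b - X) - c * Dl\<bar> + \<bar>(1/2) * (F b - f b xs) * Dl\<bar>"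
      by (rule abs_triangle_ineq)
    have t2: "\<bar>(1/2) * (F b - f b xs) * Dl\<bar> = (1/2) * \<bar>F b - f b xs\<bar> * Dl" using D0 by (simp add: abs_mult)
    have t3: "(1/2) * \<bar>F b - f b xs\<bar> * Dl \<le> (1/2) * (K2 * ((H * h) * Dl)) * Dl"
      using E3 D0 by (intro mult_right_mono) auto
    show ?thesis unfolding split using t1 t2 t3 E1 by linarith
  qed
  also have "\<dots> \<le> (H * h / 2) * (H * h) + (1/2) * (K2 * ((H * h) * (H * h))) * (H * h)"
  proof -
    have a1: "(H * h / 2) * Dl \<le> (H * h / 2) * (H * h)" using D1 Hh by (intro mult_left_mono) auto
    have "(H * h) * Dl \<le> (H * h) * (H * h)" using D1 Hh by (intro mult_left_mono) auto
    then have "K2 * ((H * h) * Dl) \<le> K2 * ((H * h) * (H * h))" using K2_nonneg by (rule mult_left_mono)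
    then have "K2 * ((H * h) * Dl) * Dl \<le> K2 * ((H * h) * (H * h)) * (H * h)"
      using D0 D1 K2_nonneg Hh H_pos h_pos by (intro mult_mono) auto
    then show ?thesis using a1 by simp
  qed
  also have "\<dots> = (1/2) * H^2 * h^2 + (1/2) * K2 * H^3 * h^3"
    by (simp add: power2_eq_square power3_eq_cube algebra_simps)
  finally show ?thesis .
qed

end




context pc_step
begin
lemma tau_ratio: "\<bar>pc_tau g f x T N (k + 1)\<bar> / pc_h T N \<le> (1/2) * H\<^sup>2 * pc_h T N + (1/2) * K2 * H ^ 3 * (pc_h T N)\<^sup>2"
proof -
  have "\<bar>pc_tau g f x T N (k + 1)\<bar> / h \<le> ((1/2) * H^2 * h^2 + (1/2) * K2 * H^3 * h^3) / h"
    using tau_bound h_pos by (intro divide_right_mono) auto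
  also have "\<dots> = (1/2) * H\<^sup>2 * h + (1/2) * K2 * H ^ 3 * h\<^sup>2"
    using h_pos by (simp add: power2_eq_square power3_eq_cube field_simps)
  finally show ?thesis by (simp add: h_def)
qed
end

context pc
begin

lemma part1: assumes "Dg g T \<subseteq> pc_t T N ` {0..Suc N}"
  shows "Max {\<bar>pc_tau g f x T N (n + 1)\<bar> / pc_h T N | n. n \<le> N}
          \<le> (1/2) * H\<^sup>2 * pc_h T N + (1/2) * K2 * H ^ 3 * (pc_h T N)\<^sup>2"
proof -
  have S: "{\<bar>pc_tau g f x T N (n + 1)\<bar> / pc_h T N | n. n \<le> N} = (\<lambda>n. \<bar>pc_tau g f x T N (n + 1)\<bar> / pc_h T N) ` {..N}"
    by auto
  have "\<bar>pc_tau g f x T N (n + 1)\<bar> / pc_h T N \<le> (1/2) * H\<^sup>2 * pc_h T N + (1/2) * K2 * H ^ 3 * (pc_h T N)\<^sup>2"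
    if "n \<le> N" for n
  proof -
    interpret s: pc_step T x0 H K2 g x f N n
      by (rule pc_step.intro[OF pc_axioms], unfold_locales) (use assms that in auto)
    show ?thesis by (rule s.tau_ratio)
  qed
  then show ?thesis unfolding S by (subst Max_le_iff) auto
qed

lemma K2_nonneg': "0 \<le> K2" using H7b T_pos by (metis abs_ge_zero atLeastAtMost_iff less_eq_real_def order.strict_trans1)

lemma part2: "\<forall>\<epsilon>>0. \<exists>\<delta>>0. \<forall>N. Dg g T \<subseteq> pc_t T N ` {0..Suc N} \<and> pc_h T N < \<delta> \<longrightarrow>
        Max {\<bar>pc_tau g f x T N (n + 1)\<bar> / pc_h T N | n. n \<le> N} < \<epsilon>"
proof (intro allI impI)
  fix \<epsilon> :: real assume e: "\<epsilon> > 0"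
  define C where "C = H\<^sup>2 + K2 * H ^ 3"
  have C0: "0 \<le> C" using K2_nonneg' H_pos by (simp add: C_def)
  define \<delta> where "\<delta> = min 1 (\<epsilon> / (C + 1))"
  have d0: "\<delta> > 0" using e C0 by (simp add: \<delta>_def)
  show "\<exists>\<delta>>0. \<forall>N. Dg g T \<subseteq> pc_t T N ` {0..Suc N} \<and> pc_h T N < \<delta> \<longrightarrow>
        Max {\<bar>pc_tau g f x T N (n + 1)\<bar> / pc_h T N | n. n \<le> N} < \<epsilon>"
  proof (intro exI[of _ \<delta>] conjI allI impI d0)
    fix N assume N: "Dg g T \<subseteq> pc_t T N ` {0..Suc N} \<and> pc_h T N < \<delta>"
    define h where "h = pc_h T N"
    have h0: "0 < h" using T_pos by (simp add: h_def pc_h_def)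
    have h1: "h < 1" "h < \<epsilon> / (C + 1)" using N by (auto simp: h_def \<delta>_def)
    have "Max {\<bar>pc_tau g f x T N (n + 1)\<bar> / pc_h T N | n. n \<le> N} \<le> (1/2) * H\<^sup>2 * h + (1/2) * K2 * H ^ 3 * h\<^sup>2"
      using part1 N by (simp add: h_def)
    also have "(1/2) * K2 * H ^ 3 * h\<^sup>2 \<le> (1/2) * K2 * H ^ 3 * h"
    proof -
      have "h\<^sup>2 \<le> h" using h0 h1 by (simp add: power2_eq_square mult_le_cancel_right1 less_imp_le)
      then show ?thesis using K2_nonneg' H_pos by (intro mult_left_mono) auto
    qed
    also have "(1/2) * H\<^sup>2 * h + (1/2) * K2 * H ^ 3 * h = (1/2) * C * h" by (simp add: C_def algebra_simps)
    also have "\<dots> \<le> C * h" using C0 h0 by simp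
    also have "C * h < (C + 1) * h" using h0 by simp
    also have "(C + 1) * h < \<epsilon>" using h1 C0 by (simp add: field_simps)
    finally show "Max {\<bar>pc_tau g f x T N (n + 1)\<bar> / pc_h T N | n. n \<le> N} < \<epsilon>" by simp
  qed
qed

end

theorem mainTheorem9:
  fixes T x0 H K2 K3 :: real
    and g x :: "real \<Rightarrow> real"
    and f :: "real \<Rightarrow> real \<Rightarrow> real"
  assumes T_pos: "T > 0"
    (* standing assumptions on g *)
    and g_nonneg: "\<forall>t\<in>{0..T}. g t \<ge> 0"
    and g_mono: "mono_on {0..T} g"
    and g_leftcont: "\<forall>t\<in>{0<..T}. continuous (at_left t) g"
    and g_cont0: "continuous (at 0 within {0..T}) g"
    and Dg_finite: "finite (Dg g T)"
    and Dg_sub: "Dg g T \<subseteq> {0<..<T}"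
    (* x is the solution of x'_g = f(t,x), x(0) = x0 *)
    and x_init: "x 0 = x0"
    and x_ode: "AE t in mu_g g T. t \<in> {0..<T} \<longrightarrow> has_g_deriv x g T t (f t (x t))"
    and x_integrable: "set_integrable (mu_g g T) {0..<T} (\<lambda>s. f s (x s))"
    and x_int_eq: "\<forall>t\<in>{0..T}. x t = x0 + (LINT s:{0..<t}|mu_g g T. f s (x s))"
    (* (H5) *)
    and H_pos: "H > 0"
    and H5a: "g_lipschitz_on {0..T} g H (\<lambda>t. f t (x t))"
    and H5b: "lipschitz_const_on {0..T} H (cont_part (\<lambda>t. f t (x t)))"
    and H5c: "lipschitz_const_on {0..T} H (cont_part g)"
    (* (H6) *)
    and H6: "\<forall>c. (\<exists>M. \<forall>t\<in>{0..T}. \<bar>f t c\<bar> \<le> M) \<and> g_continuous_on {0..T} g (\<lambda>t. f t c)"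
    (* (H7) *)
    and H7a: "\<forall>t\<in>{0..T}. (f t) C1_differentiable_on UNIV"
    and H7b: "\<forall>t\<in>{0..T}. \<forall>y. \<bar>deriv (f t) y\<bar> < K2"
    (* (H8) *)
    and H8a: "\<forall>t\<in>{0..<T}. \<forall>c. \<exists>L. ((\<lambda>s. f s c) \<longlongrightarrow> L) (at_right t)"
    and H8b: "\<forall>t\<in>{0..<T}. (fplus f t) C1_differentiable_on UNIV"
    and H8c: "\<forall>t\<in>{0..<T}. \<forall>y. \<bar>deriv (fplus f t) y\<bar> < K3"
  shows
    "(\<forall>N. Dg g T \<subseteq> pc_t T N ` {0..Suc N} \<longrightarrow>
        Max {\<bar>pc_tau g f x T N (n + 1)\<bar> / pc_h T N | n. n \<le> N}
          \<le> (1/2) * H\<^sup>2 * pc_h T N + (1/2) * K2 * H ^ 3 * (pc_h T N)\<^sup>2)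
     \<and> (\<forall>\<epsilon>>0. \<exists>\<delta>>0. \<forall>N. Dg g T \<subseteq> pc_t T N ` {0..Suc N} \<and> pc_h T N < \<delta> \<longrightarrow>
        Max {\<bar>pc_tau g f x T N (n + 1)\<bar> / pc_h T N | n. n \<le> N} < \<epsilon>)"
proof -
  interpret pc T x0 H K2 g x f
    by unfold_locales (use assms in auto)
  show ?thesis using part1 part2 by blast
qed

end
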